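(* Let $\mathcal{S}=\{(x_i,y_i)\}_{i=1}^N$ be a training set, $K$ a continuous, real-valued, symmetric, shift-invariant positive definite kernel on $\mathbb{R}^d$ with RKHS $\mathcal{H}$ and spectral probability measure $\mathbb{P}(\omega)$, $\lambda>0$, $L(u,y)$ a loss convex in $u$. Assume an optimal solution $f_*$ of $\min_{f\in\mathcal{H}}\mathbb{E}_{(x,y)\in\mathcal{S}}L(f(x),y)+\frac{\lambda}{2}\|f\|_{\mathcal{H}}^2$ exists, $|L'(u,y)|<M$ (derivative in the first argument), $L$ and $L'$ are $\mathcal{L}$-Lipschitz in the first argument, $K(x,x')\le\kappa$ for all $x,x'$, and $|\phi_\omega(x)\phi_\omega(x')|\le\phi$ for all $\omega,b,x,x'$. Let the step size satisfy $\frac{1}{\lambda}>\gamma>0$ and $C^2:=M^2(\sqrt{\kappa}+\sqrt{\phi})^2\gamma/\lambda$. With the quantities $g_t,\hat g_t,\bar g_t$, $\mathcal{M}_t,\mathcal{N}_t,\mathcal{R}_t$, $A_t$ defined in the context, $$\mathcal{M}_t\le 4\kappa M^2,\qquad \mathbb{E}_{\mathcal{D}_t,\omega_t}[\mathcal{N}_t]=0,\qquad \mathbb{E}_{\mathcal{D}_t,\omega_t}[\mathcal{R}_t]\le\kappa^{1/2}\mathcal{L}C\sqrt{\mathbb{E}_{\mathcal{D}_{t-1},\omega_{t-1}}[A_t]}.$$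
   Context: Random feature map: $\phi_\omega(x)=\sqrt{2}\cos(\omega^Tx+b)$ with $\omega\sim\mathbb{P}(\omega)$, $b\sim U[0,2\pi]$. Iterations with constant step size $\gamma$: $f_1=h_1=0$; at iteration $t$ draw $(x_t,y_t)$ uniformly from $\mathcal{S}$ and $(\omega_t,b_t)$ independently, and set $f_{t+1}=f_t-\gamma\big(L'(f_t(x_t),y_t)\phi_{\omega_t}(x_t)\phi_{\omega_t}(\cdot)+\lambda f_t\big)$, $h_{t+1}=h_t-\gamma g_t$ where $g_t=L'(f_t(x_t),y_t)K(x_t,\cdot)+\lambda h_t$. Further $\hat g_t=L'(h_t(x_t),y_t)K(x_t,\cdot)+\lambda h_t$ and $\bar g_t=\mathbb{E}_{(x_t,y_t)}[L'(h_t(x_t),y_t)K(x_t,\cdot)]+\lambda h_t$ (expectation over the data sample at iteration $t$ given the past). Define $\mathcal{M}_t=\|g_t\|_{\mathcal{H}}^2$, $\mathcal{N}_t=\langle h_t-f_*,\bar g_t-\hat g_t\rangle_{\mathcal{H}}$, $\mathcal{R}_t=\langle h_t-f_*,\hat g_t-g_t\rangle_{\mathcal{H}}$, $A_t=\|h_t-f_*\|_{\mathcal{H}}^2$. $\mathcal{D}_t$ denotes the data points sampled up to iteration $t$, and $\mathbb{E}_{\mathcal{D}_t,\omega_t}$ the expectation over data points and random features sampled up to iteration $t$. *)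

theory Defs
  imports "HOL-Probability.Probability"
begin

definition rf_feat :: "'a::euclidean_space \<Rightarrow> real \<Rightarrow> 'a \<Rightarrow> real" where
  "rf_feat \<omega> b x = sqrt 2 * cos (inner \<omega> x + b)"

definition pos_def_kernel :: "('a \<Rightarrow> 'a \<Rightarrow> real) \<Rightarrow> bool" where
  "pos_def_kernel K \<longleftrightarrow> (\<forall>(n::nat) (c::nat \<Rightarrow> real) (z::nat \<Rightarrow> 'a).
      (\<Sum>i<n. \<Sum>j<n. c i * c j * K (z i) (z j)) \<ge> 0)"

definition shift_invariant_kernel :: "('a::ab_group_add \<Rightarrow> 'a \<Rightarrow> real) \<Rightarrow> bool" where
  "shift_invariant_kernel K \<longleftrightarrow> (\<exists>k. \<forall>x x'. K x x' = k (x - x'))"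

text \<open>P is the spectral probability measure of the (real, symmetric, shift-invariant) kernel K
  (Bochner): K(x,x') = integral of exp(i omega^T(x-x')) dP = integral of cos(omega^T(x-x')) dP.\<close>
definition spectral_measure :: "'a::euclidean_space measure \<Rightarrow> ('a \<Rightarrow> 'a \<Rightarrow> real) \<Rightarrow> bool" where
  "spectral_measure P K \<longleftrightarrow> prob_space P \<and> sets P = sets borel \<and>
     (\<forall>x x'. K x x' = (\<integral>\<omega>. cos (inner \<omega> (x - x')) \<partial>P))"

text \<open>The RKHS of K, abstractly: a real Hilbert space H with the canonical feature map
  kf x = K(x,.) such that <K(x,.),K(x',.)> = K(x,x') and the span of the K(x,.) is dense.
  An element f of H is identified with the function x \<mapsto> <f, K(x,.)> (reproducing property).\<close>
definition is_RKHS_feature :: "('a \<Rightarrow> 'a \<Rightarrow> real) \<Rightarrow> ('a \<Rightarrow> 'h::real_inner) \<Rightarrow> bool" where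
  "is_RKHS_feature K kf \<longleftrightarrow> (\<forall>x x'. inner (kf x) (kf x') = K x x') \<and>
     closure (span (range kf)) = UNIV"

definition eval_H :: "('a \<Rightarrow> 'h::real_inner) \<Rightarrow> 'h \<Rightarrow> 'a \<Rightarrow> real" where
  "eval_H kf f x = inner f (kf x)"

text \<open>A sample path s assigns to every iteration t \<ge> 1 the draw
  s t = (i, omega, b): the index i of the training point (x_i, y_i) and the random feature
  parameters. dsgd_state ... n = (f_(n+1), h_(n+1)).\<close>
primrec dsgd_state ::
  "(real \<Rightarrow> 'b \<Rightarrow> real) \<Rightarrow> real \<Rightarrow> real \<Rightarrow> ('a::euclidean_space \<Rightarrow> 'h::real_inner) \<Rightarrow>
   (nat \<Rightarrow> 'a) \<Rightarrow> (nat \<Rightarrow> 'b) \<Rightarrow> (nat \<Rightarrow> nat \<times> 'a \<times> real) \<Rightarrow> nat \<Rightarrow> ('a \<Rightarrow> real) \<times> 'h" where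
  "dsgd_state Ld \<gamma> lam kf xs ys s 0 = ((\<lambda>_. 0), 0)"
| "dsgd_state Ld \<gamma> lam kf xs ys s (Suc n) =
     (let (f, h) = dsgd_state Ld \<gamma> lam kf xs ys s n;
          (i, \<omega>, b) = s (Suc n);
          x = xs i; y = ys i; d = Ld (f x) y
      in ((\<lambda>z. f z - \<gamma> * (d * rf_feat \<omega> b x * rf_feat \<omega> b z + lam * f z)),
          h - \<gamma> *\<^sub>R (d *\<^sub>R kf x + lam *\<^sub>R h)))"

definition draw_measure :: "nat \<Rightarrow> 'a measure \<Rightarrow> (nat \<times> 'a \<times> real) measure" where
  "draw_measure N P = measure_pmf (pmf_of_set {..<N}) \<Otimes>\<^sub>M (P \<Otimes>\<^sub>M uniform_measure lborel {0..2*pi})"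

definition path_measure :: "nat \<Rightarrow> 'a measure \<Rightarrow> (nat \<Rightarrow> nat \<times> 'a \<times> real) measure" where
  "path_measure N P = (\<Pi>\<^sub>M t\<in>UNIV. draw_measure N P)"

end

theory Submission
  imports Defs
begin

locale dsgd =
  fixes Ld :: "real \<Rightarrow> 'b \<Rightarrow> real" and gam lam :: real and kf :: "'a::euclidean_space \<Rightarrow> 'h::real_inner"
    and xs :: "nat \<Rightarrow> 'a" and ys :: "nat \<Rightarrow> 'b" and K :: "'a \<Rightarrow> 'a \<Rightarrow> real"
    and P :: "'a measure" and N :: nat and M \<kappa> :: real
  assumes N_pos: "N > 0" and Pprob: "prob_space P" and Psets: "sets P = sets borel"
    and Kspec: "\<And>x z. K x z = (\<integral>\<omega>. cos (inner \<omega> (x - z)) \<partial>P)"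
    and kfK: "\<And>x z. inner (kf x) (kf z) = K x z"
    and lam_pos: "lam > 0" and gam_pos: "0 < gam" and gam_lam: "gam * lam < 1"
    and Ld_bnd: "\<And>u y. \<bar>Ld u y\<bar> < M"
    and Ld_cont: "\<And>y. continuous_on UNIV (\<lambda>u. Ld u y)"
    and K_bnd: "\<And>x z. K x z \<le> \<kappa>"
begin

abbreviation "UU \<equiv> uniform_measure lborel {0..2*pi}"
abbreviation "QQ \<equiv> P \<Otimes>\<^sub>M UU"
abbreviation "PN \<equiv> measure_pmf (pmf_of_set {..<N})"
abbreviation "DD \<equiv> draw_measure N P"
abbreviation "PS \<equiv> path_measure N P"

lemma space_P: "space P = UNIV"
  using sets_eq_imp_space_eq[OF Psets] by simp

lemma prob_UU: "prob_space UU"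
  by (rule prob_space_uniform_measure) auto

lemma prob_QQ: "prob_space QQ"
proof -
  interpret p1: prob_space P by (rule Pprob)
  interpret p2: prob_space UU by (rule prob_UU)
  interpret pair_prob_space P UU ..
  show ?thesis by (rule prob_space_axioms)
qed

lemma DD_eq: "DD = PN \<Otimes>\<^sub>M QQ"
  by (simp add: draw_measure_def)

lemma prob_DD: "prob_space DD"
proof -
  interpret p1: prob_space PN by (rule measure_pmf.prob_space_axioms)
  interpret p2: prob_space QQ by (rule prob_QQ)
  interpret pair_prob_space PN QQ ..
  show ?thesis unfolding DD_eq by (rule prob_space_axioms)
qed

lemma space_DD: "space DD = UNIV"
  by (simp add: draw_measure_def space_pair_measure space_P)

lemma OO_eq: "PS = (\<Pi>\<^sub>M t\<in>UNIV. DD)"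
  by (simp add: path_measure_def)

lemma prob_OO: "prob_space PS"
  unfolding OO_eq by (rule prob_space_PiM) (rule prob_DD)

lemma space_OO: "space PS = UNIV"
  by (simp add: OO_eq space_PiM space_DD)

lemma m_comp[measurable]: "(\<lambda>s. s n) \<in> PS \<rightarrow>\<^sub>M DD"
  unfolding OO_eq by (rule measurable_component_singleton) simp

lemma m_fstD[measurable]: "fst \<in> DD \<rightarrow>\<^sub>M count_space UNIV"
proof -
  have "fst \<in> DD \<rightarrow>\<^sub>M PN" unfolding DD_eq by (rule measurable_fst)
  moreover have "(DD \<rightarrow>\<^sub>M PN) = (DD \<rightarrow>\<^sub>M count_space UNIV)"
    by (rule measurable_cong_sets[OF refl sets_measure_pmf_count_space])
  ultimately show ?thesis by simp
qed

lemma m_omD[measurable]: "(\<lambda>e. fst (snd e)) \<in> borel_measurable DD"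
proof -
  have "(\<lambda>e. fst (snd e)) \<in> DD \<rightarrow>\<^sub>M P" unfolding DD_eq
    by (rule measurable_compose[OF measurable_snd measurable_fst])
  moreover have "(DD \<rightarrow>\<^sub>M P) = (DD \<rightarrow>\<^sub>M borel)"
    by (rule measurable_cong_sets[OF refl Psets])
  ultimately show ?thesis by simp
qed

lemma m_bD[measurable]: "(\<lambda>e. snd (snd e)) \<in> borel_measurable DD"
proof -
  have "(\<lambda>e. snd (snd e)) \<in> DD \<rightarrow>\<^sub>M UU" unfolding DD_eq
    by (rule measurable_compose[OF measurable_snd measurable_snd])
  moreover have "(DD \<rightarrow>\<^sub>M UU) = (DD \<rightarrow>\<^sub>M borel)"
    by (rule measurable_cong_sets) auto
  ultimately show ?thesis by simp
qed

lemma m_idx[measurable]: "(\<lambda>s. fst (s n)) \<in> PS \<rightarrow>\<^sub>M count_space UNIV"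
  by (rule measurable_compose[OF m_comp m_fstD])

lemma m_om[measurable]: "(\<lambda>s. fst (snd (s n))) \<in> borel_measurable PS"
  by (rule measurable_compose[OF m_comp m_omD])

lemma m_b[measurable]: "(\<lambda>s. snd (snd (s n))) \<in> borel_measurable PS"
  by (rule measurable_compose[OF m_comp m_bD])

lemma Ld_meas[measurable]: "(\<lambda>u. Ld u y) \<in> borel_measurable borel"
  using Ld_cont by (rule borel_measurable_continuous_onI)

lemma m_upd: "(\<lambda>e. s(m := e)) \<in> DD \<rightarrow>\<^sub>M PS"
proof -
  have "s \<in> space PS" by (simp add: space_OO)
  then show ?thesis unfolding OO_eq
    by (intro measurable_fun_upd[where J=UNIV]) auto
qed

end

lemma int_UU: "(\<integral>b. cos (c + 2 * b) \<partial>(uniform_measure lborel {0..2*pi})) = 0"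
proof -
  have e: "emeasure lborel {0..2*pi} = ennreal (2*pi)" by simp
  have e2: "ennreal (1/(2*pi)) = 1 / ennreal (2*pi)"
    by (subst divide_ennreal[symmetric]) auto
  have dens: "(uniform_measure lborel {0..2*pi}) = density lborel (\<lambda>x. ennreal (indicator {0..2*pi} x / (2*pi)))"
    unfolding uniform_measure_def e
    by (intro arg_cong2[where f=density] refl ext) (auto simp: indicator_def e2)
  have "(\<integral>b. cos (c + 2 * b) \<partial>(uniform_measure lborel {0..2*pi})) = (\<integral>x. (indicator {0..2*pi} x / (2*pi)) *\<^sub>R cos (c + 2 * x) \<partial>lborel)"
    unfolding dens by (rule integral_density) auto
  also have "\<dots> = (LBINT x : {0..2*pi}. cos (c + 2 * x)) / (2*pi)"
    by (simp add: set_lebesgue_integral_def mult.commute)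
  also have "(LBINT x : {0..2*pi}. cos (c + 2 * x)) = (LBINT x = ereal 0..ereal (2*pi). cos (c + 2 * x))"
    by (rule interval_integral_Icc[symmetric]) simp
  also have "\<dots> = sin (c + 2 * (2*pi)) / 2 - sin (c + 2 * 0) / 2"
  proof (rule interval_integral_FTC_finite)
    show "continuous_on {min 0 (2 * pi)..max 0 (2 * pi)} (\<lambda>x. cos (c + 2 * x))"
      by (intro continuous_intros)
    fix x :: real
    have "((\<lambda>x. sin (c + 2 * x) / 2) has_real_derivative cos (c + 2 * x)) (at x)"
      by (auto intro!: derivative_eq_intros)
    then show "((\<lambda>x. sin (c + 2 * x) / 2) has_vector_derivative cos (c + 2 * x))
        (at x within {min 0 (2 * pi)..max 0 (2 * pi)})"
      by (simp add: has_real_derivative_iff_has_vector_derivative has_vector_derivative_at_within)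
  qed
  also have "\<dots> = 0"
  proof -
    have "sin (c + 2 * (2*pi)) = sin c"
    proof -
      have e: "c + 2 * (2*pi) = (c + 2 * pi) + 2 * pi" by linarith
      show ?thesis unfolding e sin_periodic ..
    qed
    then show ?thesis by (simp only: mult_zero_right add_0_right diff_self)
  qed
  finally have "(\<integral>b. cos (c + 2 * b) \<partial>(uniform_measure lborel {0..2*pi})) = 0 / (2*pi)" .
  then show ?thesis by (simp only: div_0)
qed


context dsgd begin

lemma m_updpair: "(\<lambda>(e, s). s(m := e)) \<in> DD \<Otimes>\<^sub>M PS \<rightarrow>\<^sub>M PS"
proof -
  have "(\<lambda>x. (snd x)(m := fst x)) \<in> DD \<Otimes>\<^sub>M PS \<rightarrow>\<^sub>M PS"
    unfolding OO_eq by (intro measurable_fun_upd[where J=UNIV]) (auto simp: OO_eq[symmetric])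
  then show ?thesis by (simp add: case_prod_beta')
qed

lemma distr_upd: "distr (DD \<Otimes>\<^sub>M PS) PS (\<lambda>(e, s). s(m := e)) = PS"
  using distr_pair_PiM_eq_PiM[of UNIV "\<lambda>_. DD" m] prob_DD
  by (simp add: OO_eq)

lemma freeze:
  fixes F :: "(nat \<Rightarrow> nat \<times> 'a \<times> real) \<Rightarrow> real"
  assumes Fm: "F \<in> borel_measurable PS" and Fb: "\<And>s. \<bar>F s\<bar> \<le> B"
  shows "integrable PS (\<lambda>s. \<integral>e. F (s(m := e)) \<partial>DD)"
    and "integral\<^sup>L PS F = (\<integral>s. (\<integral>e. F (s(m := e)) \<partial>DD) \<partial>PS)"
proof -
  interpret p1: prob_space DD by (rule prob_DD)
  interpret p2: prob_space PS by (rule prob_OO)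
  interpret pp: pair_prob_space DD PS ..
  have mF: "(\<lambda>(e, s). F (s(m := e))) \<in> borel_measurable (DD \<Otimes>\<^sub>M PS)"
    using measurable_compose[OF m_updpair Fm] by (simp add: case_prod_beta')
  have int: "integrable (DD \<Otimes>\<^sub>M PS) (\<lambda>(e, s). F (s(m := e)))"
    by (rule pp.integrable_const_bound[where B=B]) (use mF Fb in \<open>auto simp: case_prod_beta'\<close>)
  show "integrable PS (\<lambda>s. \<integral>e. F (s(m := e)) \<partial>DD)"
    using pp.integrable_snd[of "\<lambda>e s. F (s(m := e))"] int by simp
  have "integral\<^sup>L PS F = integral\<^sup>L (distr (DD \<Otimes>\<^sub>M PS) PS (\<lambda>(e, s). s(m := e))) F"
    by (simp add: distr_upd)
  also have "\<dots> = integral\<^sup>L (DD \<Otimes>\<^sub>M PS) (\<lambda>x. F ((\<lambda>(e, s). s(m := e)) x))"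
    by (rule integral_distr[OF m_updpair Fm])
  also have "\<dots> = (\<integral>s. (\<integral>e. F (s(m := e)) \<partial>DD) \<partial>PS)"
    using pp.integral_snd[of "\<lambda>e s. F (s(m := e))"] int by (simp add: case_prod_beta')
  finally show "integral\<^sup>L PS F = (\<integral>s. (\<integral>e. F (s(m := e)) \<partial>DD) \<partial>PS)" .
qed

lemma int_DD:
  fixes G :: "nat \<times> 'a \<times> real \<Rightarrow> real"
  assumes Gm: "G \<in> borel_measurable DD" and Gb: "\<And>e. \<bar>G e\<bar> \<le> B"
  shows "integral\<^sup>L DD G = (\<Sum>i<N. \<integral>q. G (i, q) \<partial>QQ) / real N"
proof -
  interpret p1: prob_space PN by (rule measure_pmf.prob_space_axioms)
  interpret p2: prob_space QQ by (rule prob_QQ)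
  interpret pp: pair_prob_space PN QQ ..
  have int: "integrable (PN \<Otimes>\<^sub>M QQ) (\<lambda>(i, q). G (i, q))"
    by (rule pp.integrable_const_bound[where B=B]) (use Gm Gb in \<open>auto simp: DD_eq\<close>)
  have "integral\<^sup>L DD G = (\<integral>i. (\<integral>q. G (i, q) \<partial>QQ) \<partial>PN)"
    using pp.integral_fst[of "\<lambda>i q. G (i, q)"] int by (simp add: DD_eq)
  also have "\<dots> = (\<Sum>i<N. \<integral>q. G (i, q) \<partial>QQ) / real N"
    using N_pos by (subst integral_pmf_of_set) auto
  finally show ?thesis .
qed

end

lemma rf_bnd: "\<bar>rf_feat \<omega> b x\<bar> \<le> sqrt 2"
proof -
  have "\<bar>cos (inner \<omega> x + b)\<bar> \<le> 1" by (rule abs_cos_le_one)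
  then show ?thesis unfolding rf_feat_def abs_mult by (simp add: mult_left_le)
qed

lemma zeta_bnd: "\<bar>rf_feat \<omega> b x * rf_feat \<omega> b z\<bar> \<le> 2"
proof -
  have "\<bar>rf_feat \<omega> b x * rf_feat \<omega> b z\<bar> \<le> sqrt 2 * sqrt 2"
    unfolding abs_mult by (rule mult_mono) (auto simp: rf_bnd)
  then show ?thesis by simp
qed

lemma zeta_eq: "rf_feat \<omega> b x * rf_feat \<omega> b z = cos (inner \<omega> (x - z)) + cos ((inner \<omega> x + inner \<omega> z) + 2 * b)"
proof -
  have "rf_feat \<omega> b x * rf_feat \<omega> b z = 2 * (cos (inner \<omega> x + b) * cos (inner \<omega> z + b))"
    unfolding rf_feat_def by simp
  also have "\<dots> = cos ((inner \<omega> x + b) - (inner \<omega> z + b)) + cos ((inner \<omega> x + b) + (inner \<omega> z + b))"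
    unfolding cos_times_cos by simp
  also have "(inner \<omega> x + b) - (inner \<omega> z + b) = inner \<omega> (x - z)" by (simp add: inner_diff_right)
  also have "(inner \<omega> x + b) + (inner \<omega> z + b) = (inner \<omega> x + inner \<omega> z) + 2 * b" by simp
  finally show ?thesis .
qed

context dsgd begin

lemma m_fstQ[measurable]: "fst \<in> borel_measurable QQ"
proof -
  have "fst \<in> QQ \<rightarrow>\<^sub>M P" by (rule measurable_fst)
  moreover have "(QQ \<rightarrow>\<^sub>M P) = (QQ \<rightarrow>\<^sub>M borel)"
    by (rule measurable_cong_sets[OF refl Psets])
  ultimately show ?thesis by simp
qed

lemma m_sndQ[measurable]: "snd \<in> borel_measurable QQ"
proof -
  have "snd \<in> QQ \<rightarrow>\<^sub>M UU" by (rule measurable_snd)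
  moreover have "(QQ \<rightarrow>\<^sub>M UU) = (QQ \<rightarrow>\<^sub>M borel)"
    by (rule measurable_cong_sets) auto
  ultimately show ?thesis by simp
qed

lemma m_zetaQ[measurable]: "(\<lambda>q. rf_feat (fst q) (snd q) x) \<in> borel_measurable QQ"
  unfolding rf_feat_def by measurable

lemma int_zetaQ: "integrable QQ (\<lambda>q. rf_feat (fst q) (snd q) x * rf_feat (fst q) (snd q) z)"
proof -
  interpret p: prob_space QQ by (rule prob_QQ)
  show ?thesis by (rule p.integrable_const_bound[where B=2]) (auto simp: zeta_bnd)
qed

lemma int_zeta2Q: "integrable QQ (\<lambda>q. (rf_feat (fst q) (snd q) x * rf_feat (fst q) (snd q) z)^2)"
proof -
  interpret p: prob_space QQ by (rule prob_QQ)
  have "(rf_feat \<omega> b x * rf_feat \<omega> b z)^2 \<le> 4" for \<omega> b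
  proof -
    have "\<bar>rf_feat \<omega> b x * rf_feat \<omega> b z\<bar>^2 \<le> 2^2"
      by (rule power_mono) (auto simp: zeta_bnd)
    then show ?thesis by simp
  qed
  then show ?thesis by (intro p.integrable_const_bound[where B=4]) auto
qed

lemma exp_zetaQ: "(\<integral>q. rf_feat (fst q) (snd q) x * rf_feat (fst q) (snd q) z \<partial>QQ) = K x z"
proof -
  interpret p1: prob_space P by (rule Pprob)
  interpret p2: prob_space UU by (rule prob_UU)
  interpret pp: pair_prob_space P UU ..
  have "(\<integral>q. rf_feat (fst q) (snd q) x * rf_feat (fst q) (snd q) z \<partial>QQ)
      = (\<integral>\<omega>. (\<integral>b. rf_feat \<omega> b x * rf_feat \<omega> b z \<partial>UU) \<partial>P)"
    using pp.integral_fst[of "\<lambda>\<omega> b. rf_feat \<omega> b x * rf_feat \<omega> b z"] int_zetaQ[of x z]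
    by (simp add: case_prod_beta')
  also have "\<dots> = (\<integral>\<omega>. cos (inner \<omega> (x - z)) \<partial>P)"
  proof (rule Bochner_Integration.integral_cong[OF refl])
    fix \<omega>
    have ic: "integrable UU (\<lambda>b. cos ((inner \<omega> x + inner \<omega> z) + 2 * b))"
      by (rule p2.integrable_const_bound[where B=1]) auto
    have "(\<integral>b. rf_feat \<omega> b x * rf_feat \<omega> b z \<partial>UU)
        = (\<integral>b. cos (inner \<omega> (x - z)) + cos ((inner \<omega> x + inner \<omega> z) + 2 * b) \<partial>UU)"
      by (simp add: zeta_eq)
    also have "\<dots> = cos (inner \<omega> (x - z)) + (\<integral>b. cos ((inner \<omega> x + inner \<omega> z) + 2 * b) \<partial>UU)"
      using ic by (simp add: p2.prob_space)
    also have "\<dots> = cos (inner \<omega> (x - z))" by (simp add: int_UU)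
    finally show "(\<integral>b. rf_feat \<omega> b x * rf_feat \<omega> b z \<partial>UU) = cos (inner \<omega> (x - z))" .
  qed
  also have "\<dots> = K x z" by (simp add: Kspec)
  finally show ?thesis .
qed

lemma K_abs: "\<bar>K x z\<bar> \<le> 2"
proof -
  interpret p: prob_space QQ by (rule prob_QQ)
  have "\<bar>K x z\<bar> = \<bar>\<integral>q. rf_feat (fst q) (snd q) x * rf_feat (fst q) (snd q) z \<partial>QQ\<bar>"
    by (simp add: exp_zetaQ)
  also have "\<dots> \<le> (\<integral>q. \<bar>rf_feat (fst q) (snd q) x * rf_feat (fst q) (snd q) z\<bar> \<partial>QQ)"
    by (rule integral_abs_bound)
  also have "\<dots> \<le> 2"
    by (rule p.integral_le_const) (auto simp: zeta_bnd int_zetaQ)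
  finally show ?thesis .
qed

lemma zeta2_le: "(\<integral>q. (rf_feat (fst q) (snd q) x * rf_feat (fst q) (snd q) z)^2 \<partial>QQ) \<le> 4"
proof -
  interpret p: prob_space QQ by (rule prob_QQ)
  have "(rf_feat \<omega> b x * rf_feat \<omega> b z)^2 \<le> 4" for \<omega> b
  proof -
    have "\<bar>rf_feat \<omega> b x * rf_feat \<omega> b z\<bar>^2 \<le> 2^2"
      by (rule power_mono) (auto simp: zeta_bnd)
    then show ?thesis by simp
  qed
  then show ?thesis by (intro p.integral_le_const int_zeta2Q) auto
qed

lemma Q_sq: "(\<integral>q. (c - g * (rf_feat (fst q) (snd q) x * rf_feat (fst q) (snd q) z - K x z))^2 \<partial>QQ) \<le> c^2 + g^2 * 4"
proof -
  interpret p: prob_space QQ by (rule prob_QQ)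
  define Z where "Z = (\<lambda>q. rf_feat (fst q) (snd q) x * rf_feat (fst q) (snd q) z)"
  define a where "a = c + g * K x z"
  have iZ: "integrable QQ Z" unfolding Z_def by (rule int_zetaQ)
  have iZ2: "integrable QQ (\<lambda>q. (Z q)^2)" unfolding Z_def by (rule int_zeta2Q)
  have eZ: "integral\<^sup>L QQ Z = K x z" unfolding Z_def by (rule exp_zetaQ)
  have eZ2: "(\<integral>q. (Z q)^2 \<partial>QQ) \<le> 4" unfolding Z_def by (rule zeta2_le)
  have eq: "\<And>q. (c - g * (Z q - K x z))^2 = (a^2 + (-2*a*g) * Z q) + g^2 * (Z q)^2"
    unfolding a_def by (simp add: power2_eq_square algebra_simps)
  have "(\<integral>q. (c - g * (Z q - K x z))^2 \<partial>QQ) = (\<integral>q. (a^2 + (-2*a*g) * Z q) + g^2 * (Z q)^2 \<partial>QQ)"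
    by (simp only: eq)
  also have "\<dots> = (\<integral>q. a^2 + (-2*a*g) * Z q \<partial>QQ) + (\<integral>q. g^2 * (Z q)^2 \<partial>QQ)"
    by (rule Bochner_Integration.integral_add) (use iZ iZ2 in auto)
  also have "(\<integral>q. a^2 + (-2*a*g) * Z q \<partial>QQ) = a^2 + (-2*a*g) * K x z"
    using iZ eZ by (simp add: p.prob_space)
  also have "(\<integral>q. g^2 * (Z q)^2 \<partial>QQ) = g^2 * (\<integral>q. (Z q)^2 \<partial>QQ)"
    by simp
  also have "g^2 * (\<integral>q. (Z q)^2 \<partial>QQ) \<le> g^2 * 4"
    using eZ2 by (intro mult_left_mono) auto
  finally have "(\<integral>q. (c - g * (Z q - K x z))^2 \<partial>QQ) \<le> a^2 + (-2*a*g) * K x z + g^2 * 4" by simp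
  moreover have "a^2 + (-2*a*g) * K x z = c^2 - g^2 * (K x z)^2"
    unfolding a_def by (simp add: power2_eq_square algebra_simps)
  moreover have "g^2 * (K x z)^2 \<ge> 0" by simp
  ultimately show ?thesis unfolding Z_def by linarith
qed

end

lemma normsq_comb:
  fixes h k :: "'h::real_inner"
  shows "(norm (a *\<^sub>R h - b *\<^sub>R k))^2 = a^2 * (norm h)^2 - 2*a*b*inner h k + b^2 * (norm k)^2"
  unfolding power2_norm_eq_inner by (simp add: inner_diff_left inner_diff_right inner_commute power2_eq_square algebra_simps)

context dsgd begin

abbreviation "st s n \<equiv> dsgd_state Ld gam lam kf xs ys s n"
abbreviation "FF n s \<equiv> fst (st s n)"
abbreviation "HH n s \<equiv> snd (st s n)"
abbreviation "idx s n \<equiv> fst (s n)"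
abbreviation "om s n \<equiv> fst (snd (s n))"
abbreviation "bb s n \<equiv> snd (snd (s n))"
definition "dd n s = Ld (FF n s (xs (idx s (Suc n)))) (ys (idx s (Suc n)))"
definition "zt e z = rf_feat (fst (snd e)) (snd (snd e)) (xs (fst e)) * rf_feat (fst (snd e)) (snd (snd e)) z"
definition "dif n s z = FF n s z - inner (HH n s) (kf z)"

lemma F_Suc: "FF (Suc n) s z = FF n s z - gam * (dd n s * zt (s (Suc n)) z + lam * FF n s z)"
  unfolding dd_def zt_def
  by (cases "st s n"; cases "s (Suc n)") (auto simp: Let_def)

lemma H_Suc: "HH (Suc n) s = HH n s - gam *\<^sub>R (dd n s *\<^sub>R kf (xs (idx s (Suc n))) + lam *\<^sub>R HH n s)"
  unfolding dd_def
  by (cases "st s n"; cases "s (Suc n)") (auto simp: Let_def)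

lemma H_Suc': "HH (Suc n) s = (1 - gam*lam) *\<^sub>R HH n s - (gam * dd n s) *\<^sub>R kf (xs (idx s (Suc n)))"
  unfolding H_Suc by (simp add: algebra_simps scaleR_diff_left)

declare dsgd_state.simps(2)[simp del]

lemma F_0: "FF 0 s z = 0" and H_0: "HH 0 s = 0" by simp_all

lemma st_local: "(\<And>m. m \<le> n \<Longrightarrow> s m = s' m) \<Longrightarrow> st s n = st s' n"
proof (induction n)
  case 0 then show ?case by simp
next
  case (Suc n)
  have "st s n = st s' n" using Suc by auto
  moreover have "s (Suc n) = s' (Suc n)" using Suc by auto
  ultimately show ?case by (simp only: dsgd_state.simps)
qed

lemma st_upd: "n < m \<Longrightarrow> st (s(m := e)) n = st s n"
  by (rule st_local) auto

lemma kappa_nonneg: "0 \<le> \<kappa>"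
proof -
  have "K (xs 0) (xs 0) = inner (kf (xs 0)) (kf (xs 0))" by (simp only: kfK)
  then have "0 \<le> K (xs 0) (xs 0)" by simp
  then show ?thesis using K_bnd[of "xs 0" "xs 0"] by linarith
qed

lemma norm_kf: "norm (kf x) \<le> sqrt \<kappa>"
proof -
  have "norm (kf x) = sqrt (K x x)" using kfK[of x x] by (simp add: norm_eq_sqrt_inner)
  then show ?thesis using K_bnd[of x x] by simp
qed

lemma M_pos: "0 < M" using Ld_bnd[of 0 undefined] by linarith

lemma dd_bnd: "\<bar>dd n s\<bar> \<le> M" using Ld_bnd unfolding dd_def by (simp add: less_imp_le)

lemma gl: "0 \<le> 1 - gam * lam" "1 - gam * lam \<le> 1"
  using gam_lam gam_pos lam_pos by auto

lemma H_bnd: "norm (HH n s) \<le> M * sqrt \<kappa> / lam"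
proof (induction n)
  case 0 then show ?case using M_pos lam_pos kappa_nonneg by simp
next
  case (Suc n)
  define B where "B = M * sqrt \<kappa> / lam"
  have IH: "norm (HH n s) \<le> B" using Suc unfolding B_def .
  have a1: "norm ((1 - gam*lam) *\<^sub>R HH n s) = (1 - gam*lam) * norm (HH n s)"
    using gl by simp
  have a2: "(1 - gam*lam) * norm (HH n s) \<le> (1 - gam*lam) * B"
    using IH gl(1) by (rule mult_left_mono)
  have b1: "norm ((gam * dd n s) *\<^sub>R kf (xs (idx s (Suc n)))) = gam * \<bar>dd n s\<bar> * norm (kf (xs (idx s (Suc n))))"
    using gam_pos by (simp add: abs_mult)
  have b2: "gam * \<bar>dd n s\<bar> * norm (kf (xs (idx s (Suc n)))) \<le> gam * M * sqrt \<kappa>"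
  proof -
    have "\<bar>dd n s\<bar> * norm (kf (xs (idx s (Suc n)))) \<le> M * sqrt \<kappa>"
      by (rule mult_mono) (use dd_bnd norm_kf M_pos in auto)
    then have "gam * (\<bar>dd n s\<bar> * norm (kf (xs (idx s (Suc n))))) \<le> gam * (M * sqrt \<kappa>)"
      using gam_pos by (intro mult_left_mono) auto
    then show ?thesis by (simp only: mult.assoc)
  qed
  have c: "(1 - gam*lam) * B + gam * M * sqrt \<kappa> = B"
    unfolding B_def using lam_pos by (simp add: field_simps)
  have "norm (HH (Suc n) s) \<le> norm ((1 - gam*lam) *\<^sub>R HH n s) + norm ((gam * dd n s) *\<^sub>R kf (xs (idx s (Suc n))))"
    unfolding H_Suc' by (rule norm_triangle_ineq4)
  then have "norm (HH (Suc n) s) \<le> B" using a1 a2 b1 b2 c by linarith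
  then show ?case unfolding B_def .
qed

lemma zt_bnd: "\<bar>zt e z\<bar> \<le> 2" unfolding zt_def by (rule zeta_bnd)

lemma F_bnd: "\<bar>FF n s z\<bar> \<le> 2 * gam * M * real n"
proof (induction n)
  case 0 then show ?case by simp
next
  case (Suc n)
  have e: "FF (Suc n) s z = (1 - gam*lam) * FF n s z - gam * (dd n s * zt (s (Suc n)) z)"
    unfolding F_Suc by (simp add: algebra_simps)
  have t: "\<bar>(1 - gam*lam) * FF n s z - gam * (dd n s * zt (s (Suc n)) z)\<bar>
      \<le> \<bar>(1 - gam*lam) * FF n s z\<bar> + \<bar>gam * (dd n s * zt (s (Suc n)) z)\<bar>"
    by (rule abs_triangle_ineq4)
  have a: "\<bar>(1 - gam*lam) * FF n s z\<bar> \<le> \<bar>FF n s z\<bar>"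
    using gl by (simp add: abs_mult mult_left_le_one_le)
  have b0: "\<bar>dd n s * zt (s (Suc n)) z\<bar> \<le> M * 2"
    unfolding abs_mult by (rule mult_mono) (use dd_bnd zt_bnd M_pos in auto)
  have b: "\<bar>gam * (dd n s * zt (s (Suc n)) z)\<bar> \<le> gam * (M * 2)"
    using b0 gam_pos by (simp add: abs_mult)
  have f: "2 * gam * M * real n + gam * (M * 2) = 2 * gam * M * real (Suc n)"
    by (simp add: algebra_simps)
  show ?case using e t a b Suc f by linarith
qed

end

context dsgd begin

lemma dif_Suc: "dif (Suc n) s z = (1 - gam*lam) * dif n s z - gam * dd n s * (zt (s (Suc n)) z - K (xs (idx s (Suc n))) z)"
  unfolding dif_def F_Suc H_Suc
  by (simp add: inner_diff_left inner_add_left kfK algebra_simps)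

lemma inner_H_bnd: "\<bar>inner (HH n s) (kf z)\<bar> \<le> M * sqrt \<kappa> / lam * sqrt \<kappa>"
proof -
  have "\<bar>inner (HH n s) (kf z)\<bar> \<le> norm (HH n s) * norm (kf z)" by (rule Cauchy_Schwarz_ineq2)
  also have "\<dots> \<le> M * sqrt \<kappa> / lam * sqrt \<kappa>"
    by (rule mult_mono) (use H_bnd norm_kf M_pos lam_pos kappa_nonneg in auto)
  finally show ?thesis .
qed

lemma dif_bnd: "\<bar>dif n s z\<bar> \<le> 2 * gam * M * real n + M * sqrt \<kappa> / lam * sqrt \<kappa>"
  unfolding dif_def using F_bnd[where n=n and s=s and z=z] inner_H_bnd[where n=n and s=s and z=z] by linarith

lemma meas_all: "(\<forall>z. (\<lambda>s. FF n s z) \<in> borel_measurable PS) \<and> (\<forall>v. (\<lambda>s. inner (HH n s) v) \<in> borel_measurable PS)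
   \<and> ((\<lambda>s. (norm (HH n s))^2) \<in> borel_measurable PS)"
proof (induction n)
  case 0 then show ?case by simp
next
  case (Suc n)
  have IF[measurable]: "\<And>z. (\<lambda>s. FF n s z) \<in> borel_measurable PS" using Suc by blast
  have IH[measurable]: "\<And>v. (\<lambda>s. inner (HH n s) v) \<in> borel_measurable PS" using Suc by blast
  have IN[measurable]: "(\<lambda>s. (norm (HH n s))^2) \<in> borel_measurable PS" using Suc by blast
  have ILd[measurable]: "\<And>i. (\<lambda>s. Ld (FF n s (xs i)) (ys i)) \<in> borel_measurable PS"
    by (rule measurable_compose[OF IF Ld_meas])
  have Irf[measurable]: "\<And>x. (\<lambda>s. rf_feat (om s (Suc n)) (bb s (Suc n)) x) \<in> borel_measurable PS"
    unfolding rf_feat_def by measurable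
  have A: "(\<lambda>s. FF (Suc n) s z) \<in> borel_measurable PS" for z
  proof -
    let ?G = "\<lambda>i s. FF n s z - gam * (Ld (FF n s (xs i)) (ys i) * (rf_feat (om s (Suc n)) (bb s (Suc n)) (xs i) * rf_feat (om s (Suc n)) (bb s (Suc n)) z) + lam * FF n s z)"
    have "(\<lambda>s. ?G (idx s (Suc n)) s) \<in> borel_measurable PS"
      by (rule measurable_compose_countable[OF _ m_idx]) measurable
    moreover have "(\<lambda>s. FF (Suc n) s z) = (\<lambda>s. ?G (idx s (Suc n)) s)"
      by (simp add: F_Suc dd_def zt_def)
    ultimately show ?thesis by simp
  qed
  have B: "(\<lambda>s. inner (HH (Suc n) s) v) \<in> borel_measurable PS" for v
  proof -
    let ?G = "\<lambda>i s. inner (HH n s) v - gam * (Ld (FF n s (xs i)) (ys i) * inner (kf (xs i)) v + lam * inner (HH n s) v)"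
    have "(\<lambda>s. ?G (idx s (Suc n)) s) \<in> borel_measurable PS"
      by (rule measurable_compose_countable[OF _ m_idx]) measurable
    moreover have "(\<lambda>s. inner (HH (Suc n) s) v) = (\<lambda>s. ?G (idx s (Suc n)) s)"
      by (simp add: H_Suc dd_def inner_diff_left inner_add_left)
    ultimately show ?thesis by simp
  qed
  have C: "(\<lambda>s. (norm (HH (Suc n) s))^2) \<in> borel_measurable PS"
  proof -
    let ?G = "\<lambda>i s. (1 - gam*lam)^2 * (norm (HH n s))^2 - 2 * (1 - gam*lam) * (gam * Ld (FF n s (xs i)) (ys i)) * inner (HH n s) (kf (xs i))
       + (gam * Ld (FF n s (xs i)) (ys i))^2 * (norm (kf (xs i)))^2"
    have "(\<lambda>s. ?G (idx s (Suc n)) s) \<in> borel_measurable PS"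
      by (rule measurable_compose_countable[OF _ m_idx]) measurable
    moreover have "(\<lambda>s. (norm (HH (Suc n) s))^2) = (\<lambda>s. ?G (idx s (Suc n)) s)"
      by (simp only: H_Suc' normsq_comb dd_def)
    ultimately show ?thesis by simp
  qed
  show ?case using A B C by blast
qed

lemma mF[measurable]: "(\<lambda>s. FF n s z) \<in> borel_measurable PS" using meas_all by blast
lemma mH[measurable]: "(\<lambda>s. inner (HH n s) v) \<in> borel_measurable PS" using meas_all by blast
lemma mN[measurable]: "(\<lambda>s. (norm (HH n s))^2) \<in> borel_measurable PS" using meas_all by blast

lemma mdif[measurable]: "(\<lambda>s. dif n s z) \<in> borel_measurable PS"
  unfolding dif_def by measurable

lemma mA: "(\<lambda>s. (norm (HH n s - f))^2) \<in> borel_measurable PS"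
proof -
  have "(\<lambda>s. (norm (HH n s - f))^2) = (\<lambda>s. (norm (HH n s))^2 - 2 * inner (HH n s) f + (norm f)^2)"
    by (simp add: power2_norm_eq_inner inner_diff_left inner_diff_right inner_commute algebra_simps)
  moreover have "(\<lambda>s. (norm (HH n s))^2 - 2 * inner (HH n s) f + (norm f)^2) \<in> borel_measurable PS"
    by measurable
  ultimately show ?thesis by simp
qed

end

context dsgd begin

lemma avg_freeze:
  fixes a :: "(nat \<Rightarrow> nat \<times> 'a \<times> real) \<Rightarrow> nat \<Rightarrow> real"
  assumes am: "\<And>i. (\<lambda>s. a s i) \<in> borel_measurable PS"
    and ab: "\<And>s i. \<bar>a s i\<bar> \<le> B"
    and ai: "\<And>s e i. a (s(m := e)) i = a s i"
  shows "integral\<^sup>L PS (\<lambda>s. a s (idx s m)) = integral\<^sup>L PS (\<lambda>s. (\<Sum>i<N. a s i) / real N)"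
proof -
  interpret q: prob_space QQ by (rule prob_QQ)
  have Fm: "(\<lambda>s. a s (idx s m)) \<in> borel_measurable PS"
    by (rule measurable_compose_countable[OF am m_idx])
  have "integral\<^sup>L PS (\<lambda>s. a s (idx s m)) = (\<integral>s. (\<integral>e. a (s(m := e)) (fst e) \<partial>DD) \<partial>PS)"
    using freeze(2)[OF Fm, of B m] ab by simp
  also have "\<dots> = (\<integral>s. (\<Sum>i<N. a s i) / real N \<partial>PS)"
  proof (rule Bochner_Integration.integral_cong[OF refl])
    fix s
    have Gm: "(\<lambda>e. a s (fst e)) \<in> borel_measurable DD"
      by (rule measurable_compose_countable[OF _ m_fstD]) simp
    have "(\<integral>e. a (s(m := e)) (fst e) \<partial>DD) = (\<integral>e. a s (fst e) \<partial>DD)"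
      by (simp add: ai)
    also have "\<dots> = (\<Sum>i<N. \<integral>q. a s (fst (i, q)) \<partial>QQ) / real N"
      by (rule int_DD[OF Gm, of B]) (rule ab)
    also have "\<dots> = (\<Sum>i<N. a s i) / real N"
      by (simp add: q.prob_space)
    finally show "(\<integral>e. a (s(m := e)) (fst e) \<partial>DD) = (\<Sum>i<N. a s i) / real N" .
  qed
  finally show ?thesis .
qed

lemma V_step: "(1 - gam*lam)^2 * (4 * M^2 * gam / lam) + gam^2 * M^2 * 4 \<le> 4 * M^2 * gam / lam"
proof -
  have e: "4 * M^2 * gam / lam - (1 - gam*lam)^2 * (4 * M^2 * gam / lam) = 4 * M^2 * gam^2 * (2 - gam*lam)"
    using lam_pos by (simp add: field_simps power2_eq_square)
  have "gam^2 * M^2 * 4 \<le> 4 * M^2 * gam^2 * (2 - gam*lam)"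
  proof -
    have "1 \<le> 2 - gam*lam" using gam_lam by simp
    then have "(4 * M^2 * gam^2) * 1 \<le> (4 * M^2 * gam^2) * (2 - gam*lam)"
      by (intro mult_left_mono) auto
    then show ?thesis by (simp add: algebra_simps)
  qed
  then show ?thesis using e by linarith
qed

lemma dif_upd: "n < m \<Longrightarrow> dif n (s(m := e)) z = dif n s z"
  unfolding dif_def by (simp add: st_upd)

lemma var_bnd: "integral\<^sup>L PS (\<lambda>s. (dif n s z)^2) \<le> 4 * M^2 * gam / lam"
proof (induction n arbitrary: z)
  case 0
  have "dif 0 s z = 0" for s by (simp add: dif_def)
  then show ?case using M_pos gam_pos lam_pos by simp
next
  case (Suc n)
  interpret q: prob_space QQ by (rule prob_QQ)
  interpret ps: prob_space PS by (rule prob_OO)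
  define c where "c = 2 * gam * M * real (Suc n) + M * sqrt \<kappa> / lam * sqrt \<kappa>"
  have db: "\<And>s. \<bar>(dif (Suc n) s z)^2\<bar> \<le> c^2"
  proof -
    fix s
    have "\<bar>dif (Suc n) s z\<bar>^2 \<le> c^2"
      unfolding c_def by (rule power_mono[OF dif_bnd]) simp
    then show "\<bar>(dif (Suc n) s z)^2\<bar> \<le> c^2" by simp
  qed
  have Fm: "(\<lambda>s. (dif (Suc n) s z)^2) \<in> borel_measurable PS" by measurable
  have inner: "(\<integral>e. (dif (Suc n) (s(Suc n := e)) z)^2 \<partial>DD) \<le> (1 - gam*lam)^2 * (dif n s z)^2 + gam^2 * M^2 * 4" for s
  proof -
    let ?a = "dif n s z"
    have Gm: "(\<lambda>e. (dif (Suc n) (s(Suc n := e)) z)^2) \<in> borel_measurable DD"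
      using measurable_compose[OF m_upd Fm] by simp
    have "(\<integral>e. (dif (Suc n) (s(Suc n := e)) z)^2 \<partial>DD)
        = (\<Sum>i<N. \<integral>q. (dif (Suc n) (s(Suc n := (i, q))) z)^2 \<partial>QQ) / real N"
      by (rule int_DD[OF Gm]) (rule db)
    also have "\<dots> \<le> (\<Sum>i<N. (1 - gam*lam)^2 * ?a^2 + gam^2 * M^2 * 4) / real N"
    proof (intro divide_right_mono sum_mono)
      fix i
      let ?g = "gam * Ld (FF n s (xs i)) (ys i)"
      have eq: "\<And>q. dif (Suc n) (s(Suc n := (i, q))) z
          = (1 - gam*lam) * ?a - ?g * (rf_feat (fst q) (snd q) (xs i) * rf_feat (fst q) (snd q) z - K (xs i) z)"
        unfolding dif_Suc by (simp add: dif_upd dd_def zt_def st_upd)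
      have "(\<integral>q. (dif (Suc n) (s(Suc n := (i, q))) z)^2 \<partial>QQ)
          = (\<integral>q. ((1 - gam*lam) * ?a - ?g * (rf_feat (fst q) (snd q) (xs i) * rf_feat (fst q) (snd q) z - K (xs i) z))^2 \<partial>QQ)"
        by (simp only: eq)
      also have "\<dots> \<le> ((1 - gam*lam) * ?a)^2 + ?g^2 * 4" by (rule Q_sq)
      also have "?g^2 \<le> gam^2 * M^2"
      proof -
        have "\<bar>?g\<bar> \<le> gam * M"
          using Ld_bnd[of "FF n s (xs i)" "ys i"] gam_pos by (simp add: abs_mult less_imp_le)
        then have "\<bar>?g\<bar>^2 \<le> (gam * M)^2" by (rule power_mono) simp
        then show ?thesis by (simp add: power_mult_distrib)
      qed
      then have "((1 - gam*lam) * ?a)^2 + ?g^2 * 4 \<le> ((1 - gam*lam) * ?a)^2 + gam^2 * M^2 * 4" by simp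
      finally show "(\<integral>q. (dif (Suc n) (s(Suc n := (i, q))) z)^2 \<partial>QQ) \<le> (1 - gam*lam)^2 * ?a^2 + gam^2 * M^2 * 4"
        by (simp add: power_mult_distrib)
    qed simp
    also have "\<dots> = (1 - gam*lam)^2 * ?a^2 + gam^2 * M^2 * 4"
      using N_pos by simp
    finally show ?thesis .
  qed
  have "integral\<^sup>L PS (\<lambda>s. (dif (Suc n) s z)^2) = (\<integral>s. (\<integral>e. (dif (Suc n) (s(Suc n := e)) z)^2 \<partial>DD) \<partial>PS)"
    by (rule freeze(2)[OF Fm db])
  also have "\<dots> \<le> (\<integral>s. (1 - gam*lam)^2 * (dif n s z)^2 + gam^2 * M^2 * 4 \<partial>PS)"
  proof (rule integral_mono)
    show "integrable PS (\<lambda>s. \<integral>e. (dif (Suc n) (s(Suc n := e)) z)^2 \<partial>DD)"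
      by (rule freeze(1)[OF Fm db])
    have b2: "\<bar>(dif n s z)^2\<bar> \<le> c^2" for s
    proof -
      have "\<bar>dif n s z\<bar>^2 \<le> c^2"
      proof (rule power_mono)
        have "2*gam*M*real n \<le> 2*gam*M*real (Suc n)"
          using gam_pos M_pos by (intro mult_left_mono) auto
        then show "\<bar>dif n s z\<bar> \<le> c" unfolding c_def using dif_bnd[where n=n and s=s and z=z] by linarith
      qed simp
      then show ?thesis by simp
    qed
    have "integrable PS (\<lambda>s. (dif n s z)^2)"
      by (rule ps.integrable_const_bound[where B="c^2"]) (use b2 in auto)
    then show "integrable PS (\<lambda>s. (1 - gam*lam)^2 * (dif n s z)^2 + gam^2 * M^2 * 4)"
      by simp
  qed (rule inner)
  also have "\<dots> = (1 - gam*lam)^2 * integral\<^sup>L PS (\<lambda>s. (dif n s z)^2) + gam^2 * M^2 * 4"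
  proof -
    have b2: "\<bar>(dif n s z)^2\<bar> \<le> c^2" for s
    proof -
      have "\<bar>dif n s z\<bar>^2 \<le> c^2"
      proof (rule power_mono)
        have "2*gam*M*real n \<le> 2*gam*M*real (Suc n)"
          using gam_pos M_pos by (intro mult_left_mono) auto
        then show "\<bar>dif n s z\<bar> \<le> c" unfolding c_def using dif_bnd[where n=n and s=s and z=z] by linarith
      qed simp
      then show ?thesis by simp
    qed
    have "integrable PS (\<lambda>s. (dif n s z)^2)"
      by (rule ps.integrable_const_bound[where B="c^2"]) (use b2 in auto)
    then show ?thesis by (simp add: ps.prob_space)
  qed
  also have "\<dots> \<le> (1 - gam*lam)^2 * (4 * M^2 * gam / lam) + gam^2 * M^2 * 4"
    using Suc.IH[of z] by (intro add_right_mono mult_left_mono) auto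
  also have "\<dots> \<le> 4 * M^2 * gam / lam" by (rule V_step)
  finally show ?case .
qed

end

lemma cs_le:
  fixes X Y :: "_ \<Rightarrow> real"
  assumes iX: "integrable Mm (\<lambda>x. (X x)^2)" and iY: "integrable Mm (\<lambda>x. (Y x)^2)"
    and iXY: "integrable Mm (\<lambda>x. X x * Y x)"
    and bX: "integral\<^sup>L Mm (\<lambda>x. (X x)^2) \<le> C^2" and Cp: "0 < C"
  shows "integral\<^sup>L Mm (\<lambda>x. X x * Y x) \<le> C * sqrt (integral\<^sup>L Mm (\<lambda>x. (Y x)^2))"
proof -
  define E where "E = integral\<^sup>L Mm (\<lambda>x. (Y x)^2)"
  have E0: "0 \<le> E" unfolding E_def by (rule integral_nonneg_AE) auto
  have key: "integral\<^sup>L Mm (\<lambda>x. X x * Y x) \<le> (c * C^2 + E / c) / 2" if c: "0 < c" for c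
  proof -
    have pw: "X x * Y x \<le> (c * (X x)^2 + (Y x)^2 / c) / 2" for x
    proof -
      have "0 \<le> (c * X x - Y x)^2 / c" using c by simp
      also have "(c * X x - Y x)^2 / c = c * (X x)^2 + (Y x)^2 / c - 2 * (X x * Y x)"
        using c by (simp add: field_simps power2_eq_square)
      finally show ?thesis by simp
    qed
    have "integral\<^sup>L Mm (\<lambda>x. X x * Y x) \<le> integral\<^sup>L Mm (\<lambda>x. (c * (X x)^2 + (Y x)^2 / c) / 2)"
      by (rule integral_mono[OF iXY _ pw]) (use iX iY in simp)
    also have "\<dots> = (c * integral\<^sup>L Mm (\<lambda>x. (X x)^2) + E / c) / 2"
      unfolding E_def using iX iY by simp
    also have "\<dots> \<le> (c * C^2 + E / c) / 2"
      using bX c by (simp add: mult_left_mono)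
    finally show ?thesis .
  qed
  show ?thesis
  proof (cases "E = 0")
    case True
    show ?thesis
    proof (rule ccontr)
      assume "\<not> ?thesis"
      then have d: "0 < integral\<^sup>L Mm (\<lambda>x. X x * Y x)" using True unfolding E_def by simp
      define d' where "d' = integral\<^sup>L Mm (\<lambda>x. X x * Y x)"
      have "d' \<le> (d' / C^2 * C^2 + E / (d' / C^2)) / 2"
        unfolding d'_def by (rule key) (use d Cp in simp)
      also have "\<dots> = d' / 2" using True Cp by simp
      finally show False using d unfolding d'_def by simp
    qed
  next
    case False
    then have Ep: "0 < E" using E0 by simp
    have "integral\<^sup>L Mm (\<lambda>x. X x * Y x) \<le> (sqrt E / C * C^2 + E / (sqrt E / C)) / 2"
      by (rule key) (use Ep Cp in simp)
    also have "\<dots> = C * sqrt E"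
    proof -
      have "E / (sqrt E / C) = C * sqrt E"
        using Ep Cp by (simp add: field_simps)
      moreover have "sqrt E / C * C^2 = C * sqrt E" using Cp by (simp add: power2_eq_square)
      ultimately show ?thesis by simp
    qed
    finally show ?thesis unfolding E_def .
  qed
qed


context dsgd begin

lemma K_diag: "K x x = 1"
proof -
  interpret p: prob_space P by (rule Pprob)
  show ?thesis by (simp add: Kspec p.prob_space)
qed

lemma kappa_ge1: "1 \<le> \<kappa>" using K_bnd[of "xs 0" "xs 0"] K_diag by simp

lemma part1: "(norm (Ld (FF n s (xs i)) (ys i) *\<^sub>R kf (xs i) + lam *\<^sub>R HH n s))^2 \<le> 4 * \<kappa> * M^2"
proof -
  have t: "norm (Ld (FF n s (xs i)) (ys i) *\<^sub>R kf (xs i) + lam *\<^sub>R HH n s)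
      \<le> norm (Ld (FF n s (xs i)) (ys i) *\<^sub>R kf (xs i)) + norm (lam *\<^sub>R HH n s)"
    by (rule norm_triangle_ineq)
  have a: "norm (Ld (FF n s (xs i)) (ys i) *\<^sub>R kf (xs i)) \<le> M * sqrt \<kappa>"
    unfolding norm_scaleR
    by (rule mult_mono) (use Ld_bnd[of "FF n s (xs i)" "ys i"] norm_kf M_pos in \<open>auto simp: less_imp_le\<close>)
  have b1: "norm (lam *\<^sub>R HH n s) = lam * norm (HH n s)" using lam_pos by simp
  have b2: "lam * norm (HH n s) \<le> lam * (M * sqrt \<kappa> / lam)"
    by (rule mult_left_mono[OF H_bnd]) (use lam_pos in simp)
  have b3: "lam * (M * sqrt \<kappa> / lam) = M * sqrt \<kappa>" using lam_pos by simp
  have b: "norm (lam *\<^sub>R HH n s) \<le> M * sqrt \<kappa>" using b2 unfolding b3 by (simp only: b1)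
  have "norm (Ld (FF n s (xs i)) (ys i) *\<^sub>R kf (xs i) + lam *\<^sub>R HH n s) \<le> M * sqrt \<kappa> + M * sqrt \<kappa>"
    by (rule order_trans[OF t add_mono[OF a b]])
  then have nb: "norm (Ld (FF n s (xs i)) (ys i) *\<^sub>R kf (xs i) + lam *\<^sub>R HH n s) \<le> 2 * (M * sqrt \<kappa>)"
    by simp
  have "(norm (Ld (FF n s (xs i)) (ys i) *\<^sub>R kf (xs i) + lam *\<^sub>R HH n s))^2 \<le> (2 * (M * sqrt \<kappa>))^2"
    by (rule power_mono[OF nb]) simp
  also have "\<dots> = 4 * \<kappa> * M^2" using kappa_nonneg by (simp add: power_mult_distrib)
  finally show ?thesis .
qed

lemma inner_Hf_bnd: "\<bar>inner (HH n s - f0) (kf z)\<bar> \<le> (M * sqrt \<kappa> / lam + norm f0) * sqrt \<kappa>"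
proof -
  have "\<bar>inner (HH n s - f0) (kf z)\<bar> \<le> norm (HH n s - f0) * norm (kf z)" by (rule Cauchy_Schwarz_ineq2)
  also have "\<dots> \<le> (M * sqrt \<kappa> / lam + norm f0) * sqrt \<kappa>"
  proof (rule mult_mono)
    have "norm (HH n s - f0) \<le> norm (HH n s) + norm f0" by (rule norm_triangle_ineq4)
    then show "norm (HH n s - f0) \<le> M * sqrt \<kappa> / lam + norm f0" using H_bnd[where n=n and s=s] by linarith
    show "0 \<le> M * sqrt \<kappa> / lam + norm f0" using M_pos lam_pos kappa_nonneg by simp
  qed (use norm_kf in auto)
  finally show ?thesis .
qed

lemma mHf[measurable]: "(\<lambda>s. inner (HH n s - f0) v) \<in> borel_measurable PS"
proof -
  have "(\<lambda>s. inner (HH n s) v - inner f0 v) \<in> borel_measurable PS" by measurable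
  then show ?thesis by (simp add: inner_diff_left)
qed

lemma part2:
  assumes nm: "n < m"
  shows "integral\<^sup>L PS (\<lambda>s. inner (HH n s - f0)
      ((1 / real N) *\<^sub>R (\<Sum>i<N. Ld (eval_H kf (HH n s) (xs i)) (ys i) *\<^sub>R kf (xs i)) + lam *\<^sub>R HH n s
       - (Ld (eval_H kf (HH n s) (xs (idx s m))) (ys (idx s m)) *\<^sub>R kf (xs (idx s m)) + lam *\<^sub>R HH n s))) = 0"
proof -
  interpret ps: prob_space PS by (rule prob_OO)
  define a where "a = (\<lambda>s i. Ld (inner (HH n s) (kf (xs i))) (ys i) * inner (HH n s - f0) (kf (xs i)))"
  define B where "B = M * ((M * sqrt \<kappa> / lam + norm f0) * sqrt \<kappa>)"
  have am: "(\<lambda>s. a s i) \<in> borel_measurable PS" for i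
  proof -
    have "(\<lambda>s. Ld (inner (HH n s) (kf (xs i))) (ys i)) \<in> borel_measurable PS"
      by (rule measurable_compose[OF mH Ld_meas])
    then show ?thesis unfolding a_def by measurable
  qed
  have ab: "\<bar>a s i\<bar> \<le> B" for s i
    unfolding a_def B_def abs_mult
    by (rule mult_mono) (use Ld_bnd inner_Hf_bnd M_pos in \<open>auto simp: less_imp_le\<close>)
  have ai: "a (s(m := e)) i = a s i" for s e i
    unfolding a_def using st_upd[OF nm] by simp
  have eq: "inner (HH n s - f0)
      ((1 / real N) *\<^sub>R (\<Sum>i<N. Ld (eval_H kf (HH n s) (xs i)) (ys i) *\<^sub>R kf (xs i)) + lam *\<^sub>R HH n s
       - (Ld (eval_H kf (HH n s) (xs (idx s m))) (ys (idx s m)) *\<^sub>R kf (xs (idx s m)) + lam *\<^sub>R HH n s))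
     = (\<Sum>i<N. a s i) / real N - a s (idx s m)" for s
    unfolding a_def eval_H_def
    by (simp add: inner_diff_right inner_add_right inner_sum_right divide_inverse)
  have i1: "integrable PS (\<lambda>s. (\<Sum>i<N. a s i) / real N)"
  proof -
    have "integrable PS (\<lambda>s. a s i)" for i
      by (rule ps.integrable_const_bound[where B=B]) (use am ab in auto)
    then show ?thesis by auto
  qed
  have i2: "integrable PS (\<lambda>s. a s (idx s m))"
    by (rule ps.integrable_const_bound[where B=B])
       (use ab measurable_compose_countable[OF am m_idx] in auto)
  have "integral\<^sup>L PS (\<lambda>s. (\<Sum>i<N. a s i) / real N - a s (idx s m))
      = integral\<^sup>L PS (\<lambda>s. (\<Sum>i<N. a s i) / real N) - integral\<^sup>L PS (\<lambda>s. a s (idx s m))"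
    by (rule Bochner_Integration.integral_diff[OF i1 i2])
  also have "\<dots> = 0"
    using avg_freeze[where a=a and m=m and B=B, OF am ab ai] by simp
  finally show ?thesis by (simp only: eq)
qed

end


context dsgd begin

lemma dif_bnd': "\<bar>dif n s z\<bar> \<le> 2 * gam * M * real n + M * sqrt \<kappa> / lam * sqrt \<kappa>"
  by (rule dif_bnd)

lemma Dt_bnd:
  assumes nm: "n < m"
  shows "integral\<^sup>L PS (\<lambda>s. (dif n s (xs (idx s m)))^2) \<le> 4 * M^2 * gam / lam"
proof -
  interpret ps: prob_space PS by (rule prob_OO)
  define c where "c = 2 * gam * M * real n + M * sqrt \<kappa> / lam * sqrt \<kappa>"
  define a where "a = (\<lambda>s i. (dif n s (xs i))^2)"
  have am: "(\<lambda>s. a s i) \<in> borel_measurable PS" for i unfolding a_def by measurable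
  have ab: "\<bar>a s i\<bar> \<le> c^2" for s i
  proof -
    have "\<bar>dif n s (xs i)\<bar>^2 \<le> c^2"
      unfolding c_def by (rule power_mono[OF dif_bnd]) simp
    then show ?thesis unfolding a_def by simp
  qed
  have ai: "a (s(m := e)) i = a s i" for s e i
    unfolding a_def using dif_upd[OF nm] by simp
  have ia: "integrable PS (\<lambda>s. a s i)" for i
    by (rule ps.integrable_const_bound[where B="c^2"]) (use am ab in auto)
  have "integral\<^sup>L PS (\<lambda>s. (dif n s (xs (idx s m)))^2) = integral\<^sup>L PS (\<lambda>s. a s (idx s m))"
    unfolding a_def ..
  also have "\<dots> = integral\<^sup>L PS (\<lambda>s. (\<Sum>i<N. a s i) / real N)"
    by (rule avg_freeze[where a=a and m=m and B="c^2", OF am ab ai])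
  also have "\<dots> = (\<Sum>i<N. integral\<^sup>L PS (\<lambda>s. a s i)) / real N"
    using ia by (simp add: Bochner_Integration.integral_sum)
  also have "\<dots> \<le> (\<Sum>i<N. 4 * M^2 * gam / lam) / real N"
    by (intro divide_right_mono sum_mono) (auto simp: a_def var_bnd)
  also have "\<dots> = 4 * M^2 * gam / lam" using N_pos by simp
  finally show ?thesis .
qed

lemma part3:
  assumes nm: "n < m" and Lip: "\<And>u v y. \<bar>Ld u y - Ld v y\<bar> \<le> Lip * \<bar>u - v\<bar>"
    and Cp: "0 < C" and CV: "4 * M^2 * gam / lam \<le> C^2"
  shows "integral\<^sup>L PS (\<lambda>s. inner (HH n s - f0)
      ((Ld (eval_H kf (HH n s) (xs (idx s m))) (ys (idx s m)) *\<^sub>R kf (xs (idx s m)) + lam *\<^sub>R HH n s)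
       - (Ld (FF n s (xs (idx s m))) (ys (idx s m)) *\<^sub>R kf (xs (idx s m)) + lam *\<^sub>R HH n s)))
    \<le> sqrt \<kappa> * Lip * C * sqrt (integral\<^sup>L PS (\<lambda>s. (norm (HH n s - f0))^2))"
  (is "integral\<^sup>L PS ?R \<le> ?rhs")
proof -
  interpret ps: prob_space PS by (rule prob_OO)
  have Lip0: "0 \<le> Lip"
  proof -
    have "0 \<le> \<bar>Ld 1 (ys 0) - Ld 0 (ys 0)\<bar>" by simp
    then show ?thesis using Lip[where u=1 and v=0 and y="ys 0"] by simp
  qed
  define Dt where "Dt = (\<lambda>s. dif n s (xs (idx s m)))"
  define Aa where "Aa = (\<lambda>s. (norm (HH n s - f0))^2)"
  define c where "c = 2 * gam * M * real n + M * sqrt \<kappa> / lam * sqrt \<kappa>"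
  define cA where "cA = M * sqrt \<kappa> / lam + norm f0"
  have Dtm: "Dt \<in> borel_measurable PS"
    unfolding Dt_def by (rule measurable_compose_countable[OF _ m_idx]) simp
  have Aam: "Aa \<in> borel_measurable PS" unfolding Aa_def by (rule mA)
  have Dtb: "\<bar>Dt s\<bar> \<le> c" for s unfolding Dt_def c_def by (rule dif_bnd)
  have Aa0: "0 \<le> Aa s" for s unfolding Aa_def by simp
  have sAa: "sqrt (Aa s) = norm (HH n s - f0)" for s unfolding Aa_def by simp
  have nAb: "norm (HH n s - f0) \<le> cA" for s
    using norm_triangle_ineq4[of "HH n s" f0] H_bnd[where n=n and s=s] unfolding cA_def by linarith
  have cA0: "0 \<le> cA" unfolding cA_def using M_pos lam_pos kappa_nonneg by simp
  have Aab: "\<bar>Aa s\<bar> \<le> cA^2" for s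
    unfolding Aa_def by (simp add: power_mono[OF nAb])
  have c0: "0 \<le> c" using Dtb[of undefined] by linarith
  define W where "W = (\<lambda>s. (sqrt \<kappa> * Lip) * (\<bar>Dt s\<bar> * sqrt (Aa s)))"
  have Wm: "W \<in> borel_measurable PS" unfolding W_def using Dtm Aam by measurable
  have Wb: "\<bar>W s\<bar> \<le> (sqrt \<kappa> * Lip) * (c * cA)" for s
  proof -
    have "\<bar>Dt s\<bar> * sqrt (Aa s) \<le> c * cA"
      unfolding sAa by (rule mult_mono) (use Dtb nAb c0 in auto)
    moreover have "\<bar>W s\<bar> = (sqrt \<kappa> * Lip) * (\<bar>Dt s\<bar> * sqrt (Aa s))"
      using kappa_nonneg Lip0 Aa0[of s] by (simp add: W_def abs_mult)
    moreover have "0 \<le> sqrt \<kappa> * Lip" using kappa_nonneg Lip0 by simp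
    ultimately show ?thesis by (simp add: mult_left_mono)
  qed
  have iW: "integrable PS W" by (rule ps.integrable_const_bound[OF _ Wm]) (use Wb in auto)
  have Rle: "?R s \<le> W s" for s
  proof -
    let ?x = "xs (idx s m)" and ?y = "ys (idx s m)"
    have "?R s = (Ld (inner (HH n s) (kf ?x)) ?y - Ld (FF n s ?x) ?y) * inner (HH n s - f0) (kf ?x)"
      unfolding eval_H_def by (simp add: inner_diff_right inner_add_right algebra_simps)
    also have "\<dots> \<le> \<bar>Ld (inner (HH n s) (kf ?x)) ?y - Ld (FF n s ?x) ?y\<bar> * \<bar>inner (HH n s - f0) (kf ?x)\<bar>"
      by (simp add: abs_mult[symmetric])
    also have "\<dots> \<le> (Lip * \<bar>Dt s\<bar>) * (norm (HH n s - f0) * sqrt \<kappa>)"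
    proof (rule mult_mono)
      have "\<bar>Ld (inner (HH n s) (kf ?x)) ?y - Ld (FF n s ?x) ?y\<bar> \<le> Lip * \<bar>inner (HH n s) (kf ?x) - FF n s ?x\<bar>"
        by (rule Lip)
      also have "\<bar>inner (HH n s) (kf ?x) - FF n s ?x\<bar> = \<bar>Dt s\<bar>" unfolding Dt_def dif_def by simp
      finally show "\<bar>Ld (inner (HH n s) (kf ?x)) ?y - Ld (FF n s ?x) ?y\<bar> \<le> Lip * \<bar>Dt s\<bar>" .
      have "\<bar>inner (HH n s - f0) (kf ?x)\<bar> \<le> norm (HH n s - f0) * norm (kf ?x)" by (rule Cauchy_Schwarz_ineq2)
      also have "\<dots> \<le> norm (HH n s - f0) * sqrt \<kappa>" by (rule mult_left_mono[OF norm_kf]) simp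
      finally show "\<bar>inner (HH n s - f0) (kf ?x)\<bar> \<le> norm (HH n s - f0) * sqrt \<kappa>" .
    qed (use Lip0 in auto)
    also have "\<dots> = W s" unfolding W_def sAa by (simp add: algebra_simps)
    finally show ?thesis .
  qed
  have rhs0: "0 \<le> ?rhs" using kappa_nonneg Lip0 Cp by simp
  show ?thesis
  proof (cases "integrable PS ?R")
    case False
    then show ?thesis using rhs0 by (simp add: not_integrable_integral_eq)
  next
    case True
    have "integral\<^sup>L PS ?R \<le> integral\<^sup>L PS W" by (rule integral_mono[OF True iW Rle])
    also have "integral\<^sup>L PS W = (sqrt \<kappa> * Lip) * integral\<^sup>L PS (\<lambda>s. \<bar>Dt s\<bar> * sqrt (Aa s))"
      unfolding W_def by simp
    also have "integral\<^sup>L PS (\<lambda>s. \<bar>Dt s\<bar> * sqrt (Aa s)) \<le> C * sqrt (integral\<^sup>L PS (\<lambda>s. (sqrt (Aa s))^2))"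
    proof (rule cs_le[OF _ _ _ _ Cp])
      have bD2: "\<bar>(\<bar>Dt s\<bar>)^2\<bar> \<le> c^2" for s
      proof -
        have "\<bar>Dt s\<bar>^2 \<le> c^2" by (rule power_mono[OF Dtb]) simp
        then show ?thesis by simp
      qed
      show "integrable PS (\<lambda>s. (\<bar>Dt s\<bar>)^2)"
        by (rule ps.integrable_const_bound[where B="c^2"]) (use bD2 Dtm in auto)
      show "integrable PS (\<lambda>s. (sqrt (Aa s))^2)"
        by (rule ps.integrable_const_bound[where B="cA^2"]) (use Aab Aa0 Aam in auto)
      have bDA: "\<bar>\<bar>Dt s\<bar> * sqrt (Aa s)\<bar> \<le> c * cA" for s
        unfolding sAa abs_mult by (rule mult_mono) (use Dtb nAb c0 in auto)
      show "integrable PS (\<lambda>s. \<bar>Dt s\<bar> * sqrt (Aa s))"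
        by (rule ps.integrable_const_bound[where B="c * cA"]) (use bDA Dtm Aam in auto)
      have "integral\<^sup>L PS (\<lambda>s. (\<bar>Dt s\<bar>)^2) = integral\<^sup>L PS (\<lambda>s. (dif n s (xs (idx s m)))^2)"
        unfolding Dt_def by simp
      also have "\<dots> \<le> 4 * M^2 * gam / lam" by (rule Dt_bnd[OF nm])
      finally show "integral\<^sup>L PS (\<lambda>s. (\<bar>Dt s\<bar>)^2) \<le> C^2" using CV by linarith
    qed
    also have "(\<lambda>s. (sqrt (Aa s))^2) = Aa" using Aa0 by (simp add: fun_eq_iff)
    finally show ?thesis unfolding Aa_def using kappa_nonneg Lip0
      by (simp add: mult_left_mono mult.assoc)
  qed
qed

end

theorem lemma5:
  fixes K :: "'a::euclidean_space \<Rightarrow> 'a \<Rightarrow> real"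
    and kf :: "'a \<Rightarrow> 'h::{real_inner, complete_space}"
    and P :: "'a measure"
    and N :: nat and xs :: "nat \<Rightarrow> 'a" and ys :: "nat \<Rightarrow> 'b"
    and L Ld :: "real \<Rightarrow> 'b \<Rightarrow> real"
    and lam \<gamma> M Lip \<kappa> \<phi> C :: real
    and fstar :: 'h
    and t :: nat
  assumes N_pos: "N > 0"
    and K_cont: "continuous_on UNIV (\<lambda>(x, x'). K x x')"
    and K_sym: "\<forall>x x'. K x x' = K x' x"
    and K_shift: "shift_invariant_kernel K"
    and K_pd: "pos_def_kernel K"
    and RKHS: "is_RKHS_feature K kf"
    and spectral: "spectral_measure P K"
    and lam_pos: "lam > 0"
    and L_convex: "\<forall>y. convex_on UNIV (\<lambda>u. L u y)"
    and L_deriv: "\<forall>u y. ((\<lambda>v. L v y) has_real_derivative Ld u y) (at u)"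
    and fstar_opt: "\<forall>f::'h.
        (\<Sum>i<N. L (eval_H kf fstar (xs i)) (ys i)) / real N + lam / 2 * (norm fstar)\<^sup>2
      \<le> (\<Sum>i<N. L (eval_H kf f (xs i)) (ys i)) / real N + lam / 2 * (norm f)\<^sup>2"
    and Ld_bound: "\<forall>u y. \<bar>Ld u y\<bar> < M"
    and L_lip: "\<forall>u v y. \<bar>L u y - L v y\<bar> \<le> Lip * \<bar>u - v\<bar>"
    and Ld_lip: "\<forall>u v y. \<bar>Ld u y - Ld v y\<bar> \<le> Lip * \<bar>u - v\<bar>"
    and K_bound: "\<forall>x x'. K x x' \<le> \<kappa>"
    and phi_bound: "\<forall>(\<omega>::'a) b (x::'a) x'. \<bar>rf_feat \<omega> b x * rf_feat \<omega> b x'\<bar> \<le> \<phi>"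
    and gamma: "0 < \<gamma>" "\<gamma> < 1 / lam"
    and C_def: "C = sqrt (M\<^sup>2 * (sqrt \<kappa> + sqrt \<phi>)\<^sup>2 * \<gamma> / lam)"
    and t_pos: "t \<ge> 1"
  defines "f \<equiv> \<lambda>s. fst (dsgd_state Ld \<gamma> lam kf xs ys s (t - 1))"
    and "h \<equiv> \<lambda>s. snd (dsgd_state Ld \<gamma> lam kf xs ys s (t - 1))"
    and "x \<equiv> \<lambda>s. xs (fst (s t))"
    and "y \<equiv> \<lambda>s. ys (fst (s t))"
  defines "g \<equiv> \<lambda>s. Ld (f s (x s)) (y s) *\<^sub>R kf (x s) + lam *\<^sub>R h s"
    and "ghat \<equiv> \<lambda>s. Ld (eval_H kf (h s) (x s)) (y s) *\<^sub>R kf (x s) + lam *\<^sub>R h s"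
    and "gbar \<equiv> \<lambda>s. (1 / real N) *\<^sub>R (\<Sum>i<N. Ld (eval_H kf (h s) (xs i)) (ys i) *\<^sub>R kf (xs i))
                     + lam *\<^sub>R h s"
  defines "\<M> \<equiv> \<lambda>s. (norm (g s))\<^sup>2"
    and "\<N> \<equiv> \<lambda>s. inner (h s - fstar) (gbar s - ghat s)"
    and "\<R> \<equiv> \<lambda>s. inner (h s - fstar) (ghat s - g s)"
    and "A \<equiv> \<lambda>s. (norm (h s - fstar))\<^sup>2"
  shows "(\<forall>s \<in> space (path_measure N P). \<M> s \<le> 4 * \<kappa> * M\<^sup>2)
       \<and> (\<integral>s. \<N> s \<partial>path_measure N P) = 0
       \<and> (\<integral>s. \<R> s \<partial>path_measure N P)
            \<le> sqrt \<kappa> * Lip * C * sqrt (\<integral>s. A s \<partial>path_measure N P)"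
proof -
  have Pprob: "prob_space P" and Psets: "sets P = sets borel"
    and Kspec: "\<And>x z. K x z = (\<integral>\<omega>. cos (inner \<omega> (x - z)) \<partial>P)"
    using spectral unfolding spectral_measure_def by auto
  have kfK: "\<And>x z. inner (kf x) (kf z) = K x z" using RKHS unfolding is_RKHS_feature_def by auto
  have gl: "\<gamma> * lam < 1" using gamma(2) lam_pos by (simp add: less_divide_eq mult.commute)
  have Lip0: "0 \<le> Lip"
  proof -
    have "0 \<le> \<bar>Ld 1 (ys 0) - Ld 0 (ys 0)\<bar>" by simp
    then show ?thesis using Ld_lip[rule_format, where u=1 and v=0 and y="ys 0"] by simp
  qed
  have Ld_cont: "continuous_on UNIV (\<lambda>u. Ld u y)" for y
  proof (rule lipschitz_on_continuous_on)
    show "Lip-lipschitz_on UNIV (\<lambda>u. Ld u y)"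
    proof (rule lipschitz_onI)
      fix u v :: real
      show "dist (Ld u y) (Ld v y) \<le> Lip * dist u v"
        unfolding dist_real_def using Ld_lip by blast
    qed (rule Lip0)
  qed
  have dl: "dsgd Ld \<gamma> lam kf K P N M \<kappa>"
    unfolding dsgd_def
    using N_pos Pprob Psets Kspec kfK lam_pos gamma(1) gl Ld_bound Ld_cont K_bound
    by (intro conjI allI; blast)
  interpret d: dsgd Ld \<gamma> lam kf xs ys K P N M \<kappa> by (rule dl)
  have t1: "t - 1 < t" using t_pos by simp
  have P1: "\<forall>s \<in> space (path_measure N P). \<M> s \<le> 4 * \<kappa> * M\<^sup>2"
    unfolding \<M>_def g_def f_def h_def x_def y_def using d.part1 by blast
  have P2: "(\<integral>s. \<N> s \<partial>path_measure N P) = 0"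
    unfolding \<N>_def gbar_def ghat_def h_def x_def y_def by (rule d.part2[OF t1])
  have phi2: "2 \<le> \<phi>"
  proof -
    have "\<bar>rf_feat (0::'a) 0 (0::'a) * rf_feat (0::'a) 0 (0::'a)\<bar> \<le> \<phi>" using phi_bound by blast
    then show ?thesis by (simp add: rf_feat_def)
  qed
  have k1: "1 \<le> \<kappa>" by (rule d.kappa_ge1)
  have s2: "2 \<le> sqrt \<kappa> + sqrt \<phi>"
  proof -
    have a: "1 \<le> sqrt \<kappa>" using k1 by simp
    have b: "1 \<le> sqrt \<phi>" using phi2 by simp
    show ?thesis using a b by linarith
  qed
  have s4: "4 \<le> (sqrt \<kappa> + sqrt \<phi>)^2"
  proof -
    have "2^2 \<le> (sqrt \<kappa> + sqrt \<phi>)^2" by (rule power_mono[OF s2]) simp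
    then show ?thesis by simp
  qed
  have Mp: "0 < M" by (rule d.M_pos)
  have arg0: "0 < M\<^sup>2 * (sqrt \<kappa> + sqrt \<phi>)\<^sup>2 * \<gamma> / lam"
    using Mp s2 gamma lam_pos by simp
  have Cp: "0 < C" unfolding C_def using arg0 by simp
  have CV: "4 * M^2 * \<gamma> / lam \<le> C^2"
  proof -
    have "C^2 = M\<^sup>2 * (sqrt \<kappa> + sqrt \<phi>)\<^sup>2 * \<gamma> / lam" unfolding C_def using arg0 by simp
    moreover have "4 * (M^2 * \<gamma> / lam) \<le> (sqrt \<kappa> + sqrt \<phi>)\<^sup>2 * (M^2 * \<gamma> / lam)"
      by (rule mult_right_mono[OF s4]) (use gamma lam_pos in simp)
    ultimately show ?thesis by (simp add: algebra_simps)
  qed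
  have P3: "(\<integral>s. \<R> s \<partial>path_measure N P) \<le> sqrt \<kappa> * Lip * C * sqrt (\<integral>s. A s \<partial>path_measure N P)"
    unfolding \<R>_def ghat_def g_def f_def h_def x_def y_def A_def
    by (rule d.part3[OF t1 _ Cp CV]) (use Ld_lip in blast)
  show ?thesis using P1 P2 P3 by blast
qed

end
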